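(* Let $s,d,t\ge1$, let $I=(G,D,\mathsf{cost},\mathsf{supply},\mathsf{demand})$ be an $(s,d)$-decent instance of Min Weight Generalized Domination and $Y\subseteq V(I)$. If every connected component $C$ of $G\setminus Y$ satisfies $|N(C)|\le t$, then the compressed instance $I\{Y\}$ is $(st,\,d+4^{st})$-decent.
   Context: An instance of Min Weight Generalized Domination consists of a loopless multigraph $G$ and for every vertex $u$: a finite domain $D_u$, $\mathsf{cost}_u\colon D_u\to\mathbb{R}_{\ge0}\cup\{+\infty\}$, and $\mathsf{supply}_u,\mathsf{demand}_u\colon D_u\to 2^{\delta(u)}$ ($\delta(u)$ = edges incident to $u$), with some $s_u\in D_u$ having $\mathsf{supply}_u(s_u)=\delta(u)$ and finite cost. Validity of a valuation on edge $e$ with endpoints $u,v$: $e\in\mathsf{demand}_u(\phi(u))\Rightarrow e\in\mathsf{supply}_v(\phi(v))$ and symmetrically; a valuation of $A$ is locally correct on $A$ if this holds for all edges inside $A$; costs are summed. A vertex is $(s,d)$-meager if $|\delta(u)|\le s$ and $|D_u|\le d$; state-monotonous if for all ordered $x_1,x_2\in D_u$ there is $x\in D_u$ with $\mathsf{cost}_u(x)\le\mathsf{cost}_u(x_1)+\mathsf{cost}_u(x_2)$, $\mathsf{supply}_u(x)=\mathsf{supply}_u(x_1)\cup\mathsf{supply}_u(x_2)$, $\mathsf{demand}_u(x)\subseteq\mathsf{demand}_u(x_1)$. An instance is $(s,d)$-decent if all vertices are $(s,d)$-meager and state-monotonous. For $R$ and $S=N(R)$, $E(R,S)$ is the set of edges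 between them and $\mathsf{interaction}_{R,S}(\phi)$ maps each $e\in E(R,S)$ with endpoint $u\in R$ to the subset of $\{\mathsf{Supply},\mathsf{Demand}\}$ containing $\mathsf{Supply}$ iff $e\in\mathsf{supply}_u(\phi(u))$ and $\mathsf{Demand}$ iff $e\in\mathsf{demand}_u(\phi(u))$. The compressed instance $I\{Y\}$: vertices of $Y$ keep domains, costs, supplies, demands and all incident edges (edges inside $Y$ kept). Each connected component $C_i$ of $G\setminus Y$ with nonempty $S_i=N(C_i)$ is collapsed (identified into one vertex, internal edges deleted) to a vertex $u_i$ incident exactly to the edges $E(C_i,S_i)$, with domain $(2^{\{\mathsf{Supply},\mathsf{Demand}\}})^{E(C_i,S_i)}$, $\mathsf{cost}_{u_i}(x)$ the minimum cost of a valuation of $C_i$ locally correct on $C_i$ with interaction $x$ (or $+\infty$), $\mathsf{supply}_{u_i}(x)=\{e\colon\mathsf{Supply}\in x(e)\}$, $\mathsf{demand}_{u_i}(x)=\{e\colon\mathsf{Demand}\in x(e)\}$. All components with empty neighborhood are collapsed together into one isolated vertex $u_\ominus$ with a one-element domain, whose cost is the minimum cost of a locally correct valuation of their union. *)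

theory Defs
  imports "HOL-Library.Extended_Nonnegative_Real"
begin

text \<open>A loopless multigraph is given by a vertex set, an edge set and two endpoint
  maps (edges are unordered; src/tgt just name the two endpoints).\<close>

record ('v, 'e, 's) inst =
  Vs :: "'v set"
  Es :: "'e set"
  src :: "'e \<Rightarrow> 'v"
  tgt :: "'e \<Rightarrow> 'v"
  Dm :: "'v \<Rightarrow> 's set"
  costf :: "'v \<Rightarrow> 's \<Rightarrow> ennreal"
  suppl :: "'v \<Rightarrow> 's \<Rightarrow> 'e set"
  demnd :: "'v \<Rightarrow> 's \<Rightarrow> 'e set"

definition inc :: "('v, 'e, 's) inst \<Rightarrow> 'v \<Rightarrow> 'e set" where
  "inc I u = {e \<in> Es I. src I e = u \<or> tgt I e = u}"

definition adj :: "('v, 'e, 's) inst \<Rightarrow> 'v \<Rightarrow> 'v \<Rightarrow> bool" where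
  "adj I u v \<longleftrightarrow> (\<exists>e \<in> Es I. (src I e = u \<and> tgt I e = v) \<or> (src I e = v \<and> tgt I e = u))"

definition is_instance :: "('v, 'e, 's) inst \<Rightarrow> bool" where
  "is_instance I \<longleftrightarrow>
     finite (Vs I) \<and> finite (Es I) \<and>
     (\<forall>e \<in> Es I. src I e \<in> Vs I \<and> tgt I e \<in> Vs I \<and> src I e \<noteq> tgt I e) \<and>
     (\<forall>u \<in> Vs I. finite (Dm I u) \<and>
        (\<forall>x \<in> Dm I u. suppl I u x \<subseteq> inc I u \<and> demnd I u x \<subseteq> inc I u) \<and>
        (\<exists>x \<in> Dm I u. suppl I u x = inc I u \<and> costf I u x < \<infinity>))"

definition meager :: "nat \<Rightarrow> nat \<Rightarrow> ('v, 'e, 's) inst \<Rightarrow> 'v \<Rightarrow> bool" where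
  "meager s d I u \<longleftrightarrow> card (inc I u) \<le> s \<and> card (Dm I u) \<le> d"

definition state_monotonous :: "('v, 'e, 's) inst \<Rightarrow> 'v \<Rightarrow> bool" where
  "state_monotonous I u \<longleftrightarrow>
     (\<forall>x1 \<in> Dm I u. \<forall>x2 \<in> Dm I u. \<exists>x \<in> Dm I u.
        costf I u x \<le> costf I u x1 + costf I u x2 \<and>
        suppl I u x = suppl I u x1 \<union> suppl I u x2 \<and>
        demnd I u x \<subseteq> demnd I u x1)"

definition decent :: "nat \<Rightarrow> nat \<Rightarrow> ('v, 'e, 's) inst \<Rightarrow> bool" where
  "decent s d I \<longleftrightarrow> is_instance I \<and>
     (\<forall>u \<in> Vs I. meager s d I u \<and> state_monotonous I u)"

definition valuation :: "('v, 'e, 's) inst \<Rightarrow> 'v set \<Rightarrow> ('v \<Rightarrow> 's) \<Rightarrow> bool" where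
  "valuation I A \<phi> \<longleftrightarrow> (\<forall>u \<in> A. \<phi> u \<in> Dm I u)"

definition valid_edge :: "('v, 'e, 's) inst \<Rightarrow> ('v \<Rightarrow> 's) \<Rightarrow> 'e \<Rightarrow> bool" where
  "valid_edge I \<phi> e \<longleftrightarrow>
     (e \<in> demnd I (src I e) (\<phi> (src I e)) \<longrightarrow> e \<in> suppl I (tgt I e) (\<phi> (tgt I e))) \<and>
     (e \<in> demnd I (tgt I e) (\<phi> (tgt I e)) \<longrightarrow> e \<in> suppl I (src I e) (\<phi> (src I e)))"

definition locally_correct :: "('v, 'e, 's) inst \<Rightarrow> 'v set \<Rightarrow> ('v \<Rightarrow> 's) \<Rightarrow> bool" where
  "locally_correct I A \<phi> \<longleftrightarrow>
     (\<forall>e \<in> Es I. src I e \<in> A \<and> tgt I e \<in> A \<longrightarrow> valid_edge I \<phi> e)"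

definition val_cost :: "('v, 'e, 's) inst \<Rightarrow> 'v set \<Rightarrow> ('v \<Rightarrow> 's) \<Rightarrow> ennreal" where
  "val_cost I A \<phi> = (\<Sum>u \<in> A. costf I u (\<phi> u))"

definition comp_of :: "('v, 'e, 's) inst \<Rightarrow> 'v set \<Rightarrow> 'v \<Rightarrow> 'v set" where
  "comp_of I W v = {w \<in> W. (\<lambda>a b. a \<in> W \<and> b \<in> W \<and> adj I a b)\<^sup>*\<^sup>* v w}"

definition components :: "('v, 'e, 's) inst \<Rightarrow> 'v set \<Rightarrow> 'v set set" where
  "components I W = comp_of I W ` W"

definition nbhd :: "('v, 'e, 's) inst \<Rightarrow> 'v set \<Rightarrow> 'v set" where
  "nbhd I R = {v \<in> Vs I - R. \<exists>u \<in> R. adj I u v}"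

definition Ebetween :: "('v, 'e, 's) inst \<Rightarrow> 'v set \<Rightarrow> 'v set \<Rightarrow> 'e set" where
  "Ebetween I R S = {e \<in> Es I. (src I e \<in> R \<and> tgt I e \<in> S) \<or> (src I e \<in> S \<and> tgt I e \<in> R)}"

datatype sd = Supply | Demand

definition interaction :: "('v, 'e, 's) inst \<Rightarrow> 'v set \<Rightarrow> 'v set \<Rightarrow> ('v \<Rightarrow> 's) \<Rightarrow> 'e \<Rightarrow> sd set" where
  "interaction I R S \<phi> e =
     (if e \<in> Ebetween I R S then
        (let u = (if src I e \<in> R then src I e else tgt I e) in
          {z. (z = Supply \<and> e \<in> suppl I u (\<phi> u)) \<or> (z = Demand \<and> e \<in> demnd I u (\<phi> u))})
      else {})"

datatype 'v cvert = Keep 'v | Coll "'v set" | Ominus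
datatype ('s, 'e) cstate = KS 's | IS "'e \<Rightarrow> sd set" | UnitS

definition proj :: "('v, 'e, 's) inst \<Rightarrow> 'v set \<Rightarrow> 'v \<Rightarrow> 'v cvert" where
  "proj I Y v = (if v \<in> Y then Keep v else Coll (comp_of I (Vs I - Y) v))"

definition coll_comps :: "('v, 'e, 's) inst \<Rightarrow> 'v set \<Rightarrow> 'v set set" where
  "coll_comps I Y = {C \<in> components I (Vs I - Y). nbhd I C \<noteq> {}}"

definition null_union :: "('v, 'e, 's) inst \<Rightarrow> 'v set \<Rightarrow> 'v set" where
  "null_union I Y = \<Union> {C \<in> components I (Vs I - Y). nbhd I C = {}}"

definition compress :: "('v, 'e, 's) inst \<Rightarrow> 'v set \<Rightarrow> ('v cvert, 'e, ('s, 'e) cstate) inst" where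
  "compress I Y =
    \<lparr> Vs = Keep ` Y \<union> Coll ` coll_comps I Y \<union>
           (if null_union I Y \<noteq> {} then {Ominus} else {}),
      Es = {e \<in> Es I. src I e \<in> Y \<or> tgt I e \<in> Y},
      src = (\<lambda>e. proj I Y (src I e)),
      tgt = (\<lambda>e. proj I Y (tgt I e)),
      Dm = (\<lambda>w. case w of
               Keep y \<Rightarrow> KS ` Dm I y
             | Coll C \<Rightarrow> IS ` {x. \<forall>e. e \<notin> Ebetween I C (nbhd I C) \<longrightarrow> x e = {}}
             | Ominus \<Rightarrow> {UnitS}),
      costf = (\<lambda>w a. case (w, a) of
               (Keep y, KS b) \<Rightarrow> costf I y b
             | (Coll C, IS x) \<Rightarrow> Inf {val_cost I C \<phi> | \<phi>. valuation I C \<phi> \<and>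
                   locally_correct I C \<phi> \<and> interaction I C (nbhd I C) \<phi> = x}
             | (Ominus, UnitS) \<Rightarrow> Inf {val_cost I (null_union I Y) \<phi> | \<phi>.
                   valuation I (null_union I Y) \<phi> \<and> locally_correct I (null_union I Y) \<phi>}
             | _ \<Rightarrow> \<infinity>),
      suppl = (\<lambda>w a. case (w, a) of
               (Keep y, KS b) \<Rightarrow> suppl I y b
             | (Coll C, IS x) \<Rightarrow> {e. Supply \<in> x e}
             | _ \<Rightarrow> {}),
      demnd = (\<lambda>w a. case (w, a) of
               (Keep y, KS b) \<Rightarrow> demnd I y b
             | (Coll C, IS x) \<Rightarrow> {e. Demand \<in> x e}
             | _ \<Rightarrow> {}) \<rparr>"

end

theory Submission
  imports Defs "HOL-Library.FuncSet"
begin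

lemma adj_sym: "adj I a b = adj I b a"
  by (auto simp: adj_def)

lemma comp_rel_sym:
  assumes "(\<lambda>a b. a \<in> W \<and> b \<in> W \<and> adj I a b)\<^sup>*\<^sup>* x y"
  shows "(\<lambda>a b. a \<in> W \<and> b \<in> W \<and> adj I a b)\<^sup>*\<^sup>* y x"
proof -
  have sy: "symp (\<lambda>a b. a \<in> W \<and> b \<in> W \<and> adj I a b)"
    by (auto simp: symp_def adj_sym)
  show ?thesis by (rule sympD[OF symp_rtranclp[OF sy] assms])
qed

lemma comp_self: "v \<in> W \<Longrightarrow> v \<in> comp_of I W v"
  by (auto simp: comp_of_def)

lemma comp_sub: "comp_of I W v \<subseteq> W"
  by (auto simp: comp_of_def)

lemma comp_eq:
  assumes "v \<in> comp_of I W v0"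
  shows "comp_of I W v = comp_of I W v0"
proof -
  let ?R = "\<lambda>a b. a \<in> W \<and> b \<in> W \<and> adj I a b"
  have r: "?R\<^sup>*\<^sup>* v0 v" using assms by (auto simp: comp_of_def)
  then have r': "?R\<^sup>*\<^sup>* v v0" by (rule comp_rel_sym)
  show ?thesis unfolding comp_of_def
    using r r' by (auto intro: rtranclp_trans)
qed

lemma comp_closed:
  assumes "a \<in> comp_of I W v0" "b \<in> W" "adj I a b"
  shows "b \<in> comp_of I W v0"
  using assms by (auto simp: comp_of_def intro: rtranclp.rtrancl_into_rtrancl)

lemma components_sub: "C \<in> components I W \<Longrightarrow> C \<subseteq> W"
  unfolding components_def comp_of_def by auto

lemma nbhd_sub_Y:
  assumes "C \<in> components I (Vs I - Y)"
  shows "nbhd I C \<subseteq> Y"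
proof
  fix v assume v: "v \<in> nbhd I C"
  obtain v0 where C: "C = comp_of I (Vs I - Y) v0" using assms by (auto simp: components_def)
  from v obtain u where u: "u \<in> C" "adj I u v" "v \<in> Vs I" "v \<notin> C" by (auto simp: nbhd_def)
  show "v \<in> Y"
  proof (rule ccontr)
    assume "v \<notin> Y"
    then have "v \<in> C" using comp_closed[of u I "Vs I - Y" v0 v] u C by auto
    then show False using u by auto
  qed
qed

lemma proj_coll:
  assumes "C \<in> components I (Vs I - Y)" "v \<in> Vs I"
  shows "proj I Y v = Coll C \<longleftrightarrow> v \<in> C"
proof
  assume "proj I Y v = Coll C"
  then have "v \<notin> Y" "comp_of I (Vs I - Y) v = C" by (auto simp: proj_def split: if_splits)
  then show "v \<in> C" using comp_self[of v "Vs I - Y" I] assms(2) by auto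
next
  assume v: "v \<in> C"
  obtain v0 where C: "C = comp_of I (Vs I - Y) v0" using assms by (auto simp: components_def)
  have "v \<notin> Y" using v components_sub[OF assms(1)] by auto
  then show "proj I Y v = Coll C" using comp_eq[of v I "Vs I - Y" v0] v C
    by (auto simp: proj_def)
qed

lemma c_Vs: "Vs (compress I Y) = Keep ` Y \<union> Coll ` coll_comps I Y \<union>
           (if null_union I Y \<noteq> {} then {Ominus} else {})"
  by (simp add: compress_def)
lemma c_Es: "Es (compress I Y) = {e \<in> Es I. src I e \<in> Y \<or> tgt I e \<in> Y}"
  by (simp add: compress_def)
lemma c_src: "src (compress I Y) e = proj I Y (src I e)"
  by (simp add: compress_def)
lemma c_tgt: "tgt (compress I Y) e = proj I Y (tgt I e)"
  by (simp add: compress_def)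
lemma c_Dm_K: "Dm (compress I Y) (Keep y) = KS ` Dm I y"
  by (simp add: compress_def)
lemma c_Dm_C: "Dm (compress I Y) (Coll C) = IS ` {x. \<forall>e. e \<notin> Ebetween I C (nbhd I C) \<longrightarrow> x e = {}}"
  by (simp add: compress_def)
lemma c_Dm_O: "Dm (compress I Y) Ominus = {UnitS}"
  by (simp add: compress_def)
lemma c_cost_K: "costf (compress I Y) (Keep y) (KS b) = costf I y b"
  by (simp add: compress_def)
lemma c_cost_C: "costf (compress I Y) (Coll C) (IS x) = Inf {val_cost I C \<phi> | \<phi>. valuation I C \<phi> \<and>
                   locally_correct I C \<phi> \<and> interaction I C (nbhd I C) \<phi> = x}"
  by (simp add: compress_def)
lemma c_cost_O: "costf (compress I Y) Ominus UnitS = Inf {val_cost I (null_union I Y) \<phi> | \<phi>.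
                   valuation I (null_union I Y) \<phi> \<and> locally_correct I (null_union I Y) \<phi>}"
  by (simp add: compress_def)
lemma c_sup_K: "suppl (compress I Y) (Keep y) (KS b) = suppl I y b"
  by (simp add: compress_def)
lemma c_sup_C: "suppl (compress I Y) (Coll C) (IS x) = {e. Supply \<in> x e}"
  by (simp add: compress_def)
lemma c_sup_O: "suppl (compress I Y) Ominus UnitS = {}"
  by (simp add: compress_def)
lemma c_dem_K: "demnd (compress I Y) (Keep y) (KS b) = demnd I y b"
  by (simp add: compress_def)
lemma c_dem_C: "demnd (compress I Y) (Coll C) (IS x) = {e. Demand \<in> x e}"
  by (simp add: compress_def)
lemma c_dem_O: "demnd (compress I Y) Ominus UnitS = {}"
  by (simp add: compress_def)

lemma proj_keep: "proj I Y v = Keep y \<longleftrightarrow> v = y \<and> v \<in> Y"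
  by (auto simp: proj_def)

lemma proj_not_om: "proj I Y v \<noteq> Ominus"
  by (auto simp: proj_def)

lemma inc_keep:
  assumes "y \<in> Y"
  shows "inc (compress I Y) (Keep y) = inc I y"
  using assms by (auto simp: inc_def c_Es c_src c_tgt proj_keep)

lemma inc_om: "inc (compress I Y) Ominus = {}"
  by (auto simp: inc_def c_Es c_src c_tgt proj_not_om)

lemma inc_coll:
  assumes "is_instance I" "C \<in> components I (Vs I - Y)"
  shows "inc (compress I Y) (Coll C) = Ebetween I C (nbhd I C)"
proof -
  have ends: "\<And>e. e \<in> Es I \<Longrightarrow> src I e \<in> Vs I \<and> tgt I e \<in> Vs I \<and> src I e \<noteq> tgt I e"
    using assms(1) by (auto simp: is_instance_def)
  have CW: "C \<subseteq> Vs I - Y" using components_sub[OF assms(2)] .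
  have NY: "nbhd I C \<subseteq> Y" using nbhd_sub_Y[OF assms(2)] .
  show ?thesis
  proof (rule set_eqI)
    fix e
    show "e \<in> inc (compress I Y) (Coll C) \<longleftrightarrow> e \<in> Ebetween I C (nbhd I C)"
    proof
      assume "e \<in> inc (compress I Y) (Coll C)"
      then have e: "e \<in> Es I" "src I e \<in> Y \<or> tgt I e \<in> Y"
        "proj I Y (src I e) = Coll C \<or> proj I Y (tgt I e) = Coll C"
        by (auto simp: inc_def c_Es c_src c_tgt)
      then have "src I e \<in> C \<or> tgt I e \<in> C" using proj_coll[OF assms(2)] ends by blast
      moreover have "adj I (src I e) (tgt I e)" using e(1) by (auto simp: adj_def)
      moreover have "adj I (tgt I e) (src I e)" using e(1) by (auto simp: adj_def)
      ultimately show "e \<in> Ebetween I C (nbhd I C)"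
      proof (elim disjE)
        assume a: "src I e \<in> C" and b: "adj I (src I e) (tgt I e)"
        then have "tgt I e \<in> Y" using e(2) CW by auto
        then have "tgt I e \<in> nbhd I C" using a b ends[OF e(1)] CW unfolding nbhd_def by auto
        then show ?thesis using a e(1) unfolding Ebetween_def by auto
      next
        assume a: "tgt I e \<in> C" and b: "adj I (tgt I e) (src I e)"
        then have "src I e \<in> Y" using e(2) CW by auto
        then have "src I e \<in> nbhd I C" using a b ends[OF e(1)] CW unfolding nbhd_def by auto
        then show ?thesis using a e(1) unfolding Ebetween_def by auto
      qed
    next
      assume e: "e \<in> Ebetween I C (nbhd I C)"
      then have "e \<in> Es I" by (auto simp: Ebetween_def)
      have ends': "src I e \<in> Vs I" "tgt I e \<in> Vs I" using ends[OF \<open>e \<in> Es I\<close>] by auto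
      have "(src I e \<in> C \<and> tgt I e \<in> Y) \<or> (src I e \<in> Y \<and> tgt I e \<in> C)"
        using e NY unfolding Ebetween_def by blast
      then have "(src I e \<in> Y \<or> tgt I e \<in> Y) \<and>
          (proj I Y (src I e) = Coll C \<or> proj I Y (tgt I e) = Coll C)"
        using proj_coll[OF assms(2) ends'(1)] proj_coll[OF assms(2) ends'(2)] by blast
      then show "e \<in> inc (compress I Y) (Coll C)"
        using \<open>e \<in> Es I\<close> unfolding inc_def c_Es c_src c_tgt by simp
    qed
  qed
qed

definition allsup :: "('v, 'e, 's) inst \<Rightarrow> 'v \<Rightarrow> 's" where
  "allsup I u = (SOME x. x \<in> Dm I u \<and> suppl I u x = inc I u \<and> costf I u x < \<infinity>)"

lemma allsup:
  assumes "is_instance I" "u \<in> Vs I"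
  shows "allsup I u \<in> Dm I u \<and> suppl I u (allsup I u) = inc I u \<and> costf I u (allsup I u) < \<infinity>"
proof -
  have "\<exists>x. x \<in> Dm I u \<and> suppl I u x = inc I u \<and> costf I u x < \<infinity>"
    using assms unfolding is_instance_def by blast
  then show ?thesis unfolding allsup_def by (rule someI_ex)
qed

lemma allsup_val:
  assumes "is_instance I" "A \<subseteq> Vs I"
  shows "valuation I A (allsup I) \<and> locally_correct I A (allsup I) \<and> val_cost I A (allsup I) < \<infinity>"
proof -
  have fin: "finite A" using assms finite_subset unfolding is_instance_def by blast
  have v: "valuation I A (allsup I)" using allsup[OF assms(1)] assms(2) unfolding valuation_def by blast
  have lc: "locally_correct I A (allsup I)"
    unfolding locally_correct_def valid_edge_def
  proof (intro ballI impI conjI)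
    fix e assume e: "e \<in> Es I" "src I e \<in> A \<and> tgt I e \<in> A"
    show "e \<in> suppl I (tgt I e) (allsup I (tgt I e))"
      using allsup[OF assms(1), of "tgt I e"] e assms(2) by (auto simp: inc_def)
    show "e \<in> suppl I (src I e) (allsup I (src I e))"
      using allsup[OF assms(1), of "src I e"] e assms(2) by (auto simp: inc_def)
  qed
  have "val_cost I A (allsup I) < \<infinity>"
    using allsup[OF assms(1)] assms(2) fin unfolding val_cost_def by auto
  then show ?thesis using v lc by blast
qed

lemma keep_ok:
  fixes I :: "('v, 'e, 's) inst" and Y :: "'v set"
  assumes "decent s d I" "y \<in> Y" "Y \<subseteq> Vs I" "t \<ge> 1"
  defines "J \<equiv> compress I Y"
  shows "finite (Dm J (Keep y)) \<and>
    (\<forall>x \<in> Dm J (Keep y). suppl J (Keep y) x \<subseteq> inc J (Keep y) \<and> demnd J (Keep y) x \<subseteq> inc J (Keep y)) \<and>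
    (\<exists>x \<in> Dm J (Keep y). suppl J (Keep y) x = inc J (Keep y) \<and> costf J (Keep y) x < \<infinity>) \<and>
    meager (s * t) (d + 4 ^ (s * t)) J (Keep y) \<and> state_monotonous J (Keep y)"
proof -
  have inst: "is_instance I" and yv: "y \<in> Vs I" and m: "meager s d I y" and sm: "state_monotonous I y"
    using assms unfolding decent_def by auto
  have D: "Dm J (Keep y) = KS ` Dm I y" unfolding J_def by (rule c_Dm_K)
  have ic: "inc J (Keep y) = inc I y" unfolding J_def using assms(2) by (rule inc_keep)
  have fin: "finite (Dm I y)" using inst yv unfolding is_instance_def by blast
  have p1: "\<forall>x \<in> Dm J (Keep y). suppl J (Keep y) x \<subseteq> inc J (Keep y) \<and> demnd J (Keep y) x \<subseteq> inc J (Keep y)"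
    using inst yv unfolding D ic is_instance_def by (auto simp: J_def c_sup_K c_dem_K)
  have p2: "\<exists>x \<in> Dm J (Keep y). suppl J (Keep y) x = inc J (Keep y) \<and> costf J (Keep y) x < \<infinity>"
    using inst yv unfolding D ic is_instance_def by (auto simp: J_def c_sup_K c_cost_K)
  have "card (inc I y) \<le> s" "card (Dm I y) \<le> d" using m unfolding meager_def by auto
  moreover have "s \<le> s * t" using assms(4) by simp
  moreover have "card (KS ` Dm I y) \<le> card (Dm I y)" by (rule card_image_le[OF fin])
  ultimately have p3: "meager (s * t) (d + 4 ^ (s * t)) J (Keep y)"
    unfolding meager_def D ic
    by (metis (no_types, lifting) le_add1 le_trans)
  have p4: "state_monotonous J (Keep y)"
    unfolding state_monotonous_def D
  proof (intro ballI)
    fix a b :: "('s, 'e) cstate" assume "a \<in> KS ` Dm I y" "b \<in> KS ` Dm I y"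
    then obtain a' b' where ab: "a = KS a'" "b = KS b'" "a' \<in> Dm I y" "b' \<in> Dm I y" by auto
    then obtain x where x: "x \<in> Dm I y" "costf I y x \<le> costf I y a' + costf I y b'"
       "suppl I y x = suppl I y a' \<union> suppl I y b'" "demnd I y x \<subseteq> demnd I y a'"
      using sm unfolding state_monotonous_def by blast
    show "\<exists>x\<in>KS ` Dm I y. costf J (Keep y) x \<le> costf J (Keep y) a + costf J (Keep y) b \<and>
          suppl J (Keep y) x = suppl J (Keep y) a \<union> suppl J (Keep y) b \<and>
          demnd J (Keep y) x \<subseteq> demnd J (Keep y) a"
      by (rule bexI[of _ "KS x"]) (use x ab in \<open>auto simp: J_def c_sup_K c_dem_K c_cost_K\<close>)
  qed
  show ?thesis using p1 p2 p3 p4 fin D by auto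
qed

lemma null_union_sub: "null_union I Y \<subseteq> Vs I"
  unfolding null_union_def using components_sub by blast

lemma om_ok:
  fixes I :: "('v, 'e, 's) inst" and Y :: "'v set"
  assumes "decent s d I" "d \<ge> 1"
  defines "J \<equiv> compress I Y"
  shows "finite (Dm J Ominus) \<and>
    (\<forall>x \<in> Dm J Ominus. suppl J Ominus x \<subseteq> inc J Ominus \<and> demnd J Ominus x \<subseteq> inc J Ominus) \<and>
    (\<exists>x \<in> Dm J Ominus. suppl J Ominus x = inc J Ominus \<and> costf J Ominus x < \<infinity>) \<and>
    meager (s * t) (d + 4 ^ (s * t)) J Ominus \<and> state_monotonous J Ominus"
proof -
  have inst: "is_instance I" using assms unfolding decent_def by auto
  have D: "Dm J Ominus = {UnitS}" unfolding J_def by (rule c_Dm_O)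
  have ic: "inc J Ominus = {}" unfolding J_def by (rule inc_om)
  obtain v where v: "valuation I (null_union I Y) v" "locally_correct I (null_union I Y) v"
     "val_cost I (null_union I Y) v < \<infinity>"
    using allsup_val[OF inst null_union_sub] by blast
  have "costf J Ominus UnitS \<le> val_cost I (null_union I Y) v"
    unfolding J_def c_cost_O by (rule Inf_lower) (use v in blast)
  then have c: "costf J Ominus UnitS < \<infinity>" using v(3) by (meson le_less_trans)
  have sm: "state_monotonous J Ominus"
    unfolding state_monotonous_def D by (simp add: J_def c_sup_O c_dem_O add_increasing)
  show ?thesis using c sm assms(2) unfolding D ic meager_def by (simp add: J_def c_sup_O c_dem_O)
qed

lemma UNIV_sd: "(UNIV :: sd set) = {Supply, Demand}"
  using sd.exhaust by auto

lemma card_sdset: "card (UNIV :: sd set set) = 4"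
proof -
  have "card (UNIV :: sd set) = 2" by (simp add: UNIV_sd)
  moreover have "(UNIV :: sd set set) = Pow UNIV" by simp
  ultimately show ?thesis using card_Pow[of "UNIV :: sd set"] by (simp add: UNIV_sd del: Pow_UNIV)
qed

lemma fin_sdset: "finite (UNIV :: sd set set)"
  using card_sdset card.infinite by force

lemma fun_set:
  assumes "finite E"
  shows "finite {x :: 'e \<Rightarrow> sd set. \<forall>e. e \<notin> E \<longrightarrow> x e = {}} \<and>
         card {x :: 'e \<Rightarrow> sd set. \<forall>e. e \<notin> E \<longrightarrow> x e = {}} \<le> 4 ^ card E"
proof -
  let ?F = "{x :: 'e \<Rightarrow> sd set. \<forall>e. e \<notin> E \<longrightarrow> x e = {}}"
  let ?P = "PiE E (\<lambda>_. UNIV :: sd set set)"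
  let ?f = "\<lambda>g e. if e \<in> E then g e else ({} :: sd set)"
  have sub: "?F \<subseteq> ?f ` ?P"
  proof
    fix x assume x: "x \<in> ?F"
    have "x = ?f (restrict x E)" using x by (auto simp: fun_eq_iff)
    moreover have "restrict x E \<in> ?P" by auto
    ultimately show "x \<in> ?f ` ?P" by blast
  qed
  have fP: "finite ?P" using assms by (simp add: finite_PiE fin_sdset)
  have cP: "card ?P = 4 ^ card E" using assms by (simp add: card_PiE card_sdset)
  have "finite ?F" using sub fP finite_subset by blast
  moreover have "card ?F \<le> card (?f ` ?P)" using sub fP by (simp add: card_mono)
  moreover have "card (?f ` ?P) \<le> card ?P" using fP by (rule card_image_le)
  ultimately show ?thesis using cP by simp
qed

lemma Ebetween_card:
  assumes "decent s d I" "C \<in> components I (Vs I - Y)" "card (nbhd I C) \<le> t"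
  shows "finite (Ebetween I C (nbhd I C)) \<and> card (Ebetween I C (nbhd I C)) \<le> s * t"
proof -
  have inst: "is_instance I" using assms unfolding decent_def by auto
  have fE: "finite (Es I)" using inst unfolding is_instance_def by auto
  have fV: "finite (Vs I)" using inst unfolding is_instance_def by auto
  let ?N = "nbhd I C"
  have fN: "finite ?N" using fV finite_subset[of ?N "Vs I"] by (auto simp: nbhd_def)
  have sub: "Ebetween I C ?N \<subseteq> (\<Union>v\<in>?N. inc I v)"
    unfolding Ebetween_def inc_def by auto
  have fin: "finite (Ebetween I C ?N)" using fE finite_subset[of "Ebetween I C ?N" "Es I"]
    by (auto simp: Ebetween_def)
  have "card (Ebetween I C ?N) \<le> card (\<Union>v\<in>?N. inc I v)"
    using sub fN fE by (intro card_mono) (auto simp: inc_def)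
  also have "\<dots> \<le> (\<Sum>v\<in>?N. card (inc I v))" using fN by (rule card_UN_le)
  also have "\<dots> \<le> (\<Sum>v\<in>?N. s)"
  proof (rule sum_mono)
    fix v assume "v \<in> ?N"
    then have "v \<in> Vs I" by (auto simp: nbhd_def)
    then show "card (inc I v) \<le> s" using assms(1) unfolding decent_def meager_def by auto
  qed
  also have "\<dots> = card ?N * s" by simp
  also have "\<dots> \<le> t * s" using assms(3) by simp
  finally show ?thesis using fin by (simp add: mult.commute)
qed

definition ep :: "('v, 'e, 's) inst \<Rightarrow> 'v set \<Rightarrow> 'e \<Rightarrow> 'v" where
  "ep I C e = (if src I e \<in> C then src I e else tgt I e)"

lemma ep_in: "e \<in> Ebetween I C S \<Longrightarrow> C \<inter> S = {} \<Longrightarrow> ep I C e \<in> C"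
  by (auto simp: ep_def Ebetween_def)

lemma interaction_S:
  "Supply \<in> interaction I C S \<phi> e \<longleftrightarrow> e \<in> Ebetween I C S \<and> e \<in> suppl I (ep I C e) (\<phi> (ep I C e))"
  by (auto simp: interaction_def ep_def Let_def)

lemma interaction_D:
  "Demand \<in> interaction I C S \<phi> e \<longleftrightarrow> e \<in> Ebetween I C S \<and> e \<in> demnd I (ep I C e) (\<phi> (ep I C e))"
  by (auto simp: interaction_def ep_def Let_def)

lemma interaction_out: "e \<notin> Ebetween I C S \<Longrightarrow> interaction I C S \<phi> e = {}"
  by (auto simp: interaction_def)

lemma Inf_attained:
  fixes A :: "ennreal set"
  assumes "finite A" "Inf A < \<infinity>"
  shows "Inf A \<in> A"
proof -
  have "A \<noteq> {}" using assms(2) by auto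
  then show ?thesis using assms(1) by (simp add: cInf_eq_Min)
qed

lemma cost_attained:
  assumes "is_instance I" "C \<subseteq> Vs I"
    and "Inf {val_cost I C \<phi> | \<phi>. valuation I C \<phi> \<and> locally_correct I C \<phi> \<and> interaction I C S \<phi> = x} < \<infinity>"
  shows "\<exists>\<phi>. valuation I C \<phi> \<and> locally_correct I C \<phi> \<and> interaction I C S \<phi> = x \<and>
     val_cost I C \<phi> = Inf {val_cost I C \<phi> | \<phi>. valuation I C \<phi> \<and> locally_correct I C \<phi> \<and> interaction I C S \<phi> = x}"
proof -
  let ?A = "{val_cost I C \<phi> | \<phi>. valuation I C \<phi> \<and> locally_correct I C \<phi> \<and> interaction I C S \<phi> = x}"
  have fC: "finite C" using assms(1,2) finite_subset unfolding is_instance_def by blast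
  have fP: "finite (PiE C (Dm I))"
    using fC assms(1,2) unfolding is_instance_def by (intro finite_PiE) auto
  have "?A \<subseteq> (\<lambda>\<psi>. val_cost I C \<psi>) ` PiE C (Dm I)"
  proof
    fix a assume "a \<in> ?A"
    then obtain \<phi> where p: "a = val_cost I C \<phi>" "valuation I C \<phi>" by blast
    have "a = val_cost I C (restrict \<phi> C)" unfolding p val_cost_def by (rule sum.cong) auto
    moreover have "restrict \<phi> C \<in> PiE C (Dm I)" using p(2) unfolding valuation_def by auto
    ultimately show "a \<in> (\<lambda>\<psi>. val_cost I C \<psi>) ` PiE C (Dm I)" by blast
  qed
  then have "finite ?A" using fP finite_subset by blast
  then have "Inf ?A \<in> ?A" using assms(3) by (rule Inf_attained)
  then show ?thesis by auto
qed

lemma combine: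
  assumes "decent s d I" "C \<subseteq> Vs I"
    and "valuation I C \<phi>1" "locally_correct I C \<phi>1"
    and "valuation I C \<phi>2" "locally_correct I C \<phi>2"
  shows "\<exists>\<phi>. valuation I C \<phi> \<and> locally_correct I C \<phi> \<and>
     val_cost I C \<phi> \<le> val_cost I C \<phi>1 + val_cost I C \<phi>2 \<and>
     (\<forall>u\<in>C. suppl I u (\<phi> u) = suppl I u (\<phi>1 u) \<union> suppl I u (\<phi>2 u) \<and>
             demnd I u (\<phi> u) \<subseteq> demnd I u (\<phi>1 u))"
proof -
  have "\<forall>u\<in>C. \<exists>x. x \<in> Dm I u \<and> costf I u x \<le> costf I u (\<phi>1 u) + costf I u (\<phi>2 u) \<and>
      suppl I u x = suppl I u (\<phi>1 u) \<union> suppl I u (\<phi>2 u) \<and> demnd I u x \<subseteq> demnd I u (\<phi>1 u)"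
  proof
    fix u assume u: "u \<in> C"
    then have "state_monotonous I u" using assms(1,2) unfolding decent_def by auto
    moreover have "\<phi>1 u \<in> Dm I u" "\<phi>2 u \<in> Dm I u" using u assms(3,5) unfolding valuation_def by auto
    ultimately show "\<exists>x. x \<in> Dm I u \<and> costf I u x \<le> costf I u (\<phi>1 u) + costf I u (\<phi>2 u) \<and>
      suppl I u x = suppl I u (\<phi>1 u) \<union> suppl I u (\<phi>2 u) \<and> demnd I u x \<subseteq> demnd I u (\<phi>1 u)"
      unfolding state_monotonous_def by blast
  qed
  then obtain \<phi> where p: "\<forall>u\<in>C. \<phi> u \<in> Dm I u \<and> costf I u (\<phi> u) \<le> costf I u (\<phi>1 u) + costf I u (\<phi>2 u) \<and>
      suppl I u (\<phi> u) = suppl I u (\<phi>1 u) \<union> suppl I u (\<phi>2 u) \<and> demnd I u (\<phi> u) \<subseteq> demnd I u (\<phi>1 u)"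
    by metis
  have v: "valuation I C \<phi>" using p unfolding valuation_def by blast
  have lc: "locally_correct I C \<phi>"
    unfolding locally_correct_def
  proof (intro ballI impI)
    fix e assume e: "e \<in> Es I" "src I e \<in> C \<and> tgt I e \<in> C"
    then have "valid_edge I \<phi>1 e" using assms(4) unfolding locally_correct_def by blast
    then show "valid_edge I \<phi> e" using p e unfolding valid_edge_def by blast
  qed
  have "val_cost I C \<phi> \<le> (\<Sum>u\<in>C. costf I u (\<phi>1 u) + costf I u (\<phi>2 u))"
    unfolding val_cost_def using p by (intro sum_mono) blast
  also have "\<dots> = val_cost I C \<phi>1 + val_cost I C \<phi>2" unfolding val_cost_def by (rule sum.distrib)
  finally show ?thesis using v lc p by blast
qed

lemma coll_ok:
  fixes I :: "('v, 'e, 's) inst" and Y :: "'v set"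
  assumes "decent s d I" "C \<in> coll_comps I Y" "card (nbhd I C) \<le> t"
  defines "J \<equiv> compress I Y"
  shows "finite (Dm J (Coll C)) \<and>
    (\<forall>x \<in> Dm J (Coll C). suppl J (Coll C) x \<subseteq> inc J (Coll C) \<and> demnd J (Coll C) x \<subseteq> inc J (Coll C)) \<and>
    (\<exists>x \<in> Dm J (Coll C). suppl J (Coll C) x = inc J (Coll C) \<and> costf J (Coll C) x < \<infinity>) \<and>
    meager (s * t) (d + 4 ^ (s * t)) J (Coll C) \<and> state_monotonous J (Coll C)"
proof -
  have inst: "is_instance I" using assms unfolding decent_def by auto
  have Cc: "C \<in> components I (Vs I - Y)" using assms(2) unfolding coll_comps_def by auto
  have CV: "C \<subseteq> Vs I" using components_sub[OF Cc] by auto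
  let ?S = "nbhd I C"
  let ?E = "Ebetween I C ?S"
  let ?F = "{x :: 'e \<Rightarrow> sd set. \<forall>e. e \<notin> ?E \<longrightarrow> x e = {}}"
  have disj: "C \<inter> ?S = {}" by (auto simp: nbhd_def)
  have D: "Dm J (Coll C) = IS ` ?F" unfolding J_def by (rule c_Dm_C)
  have ic: "inc J (Coll C) = ?E" unfolding J_def by (rule inc_coll[OF inst Cc])
  have Eb: "finite ?E \<and> card ?E \<le> s * t" by (rule Ebetween_card[OF assms(1) Cc assms(3)])
  have Fb: "finite ?F \<and> card ?F \<le> 4 ^ card ?E" using Eb fun_set by blast
  have cost_eq: "\<And>x. costf J (Coll C) (IS x) = Inf {val_cost I C \<phi> | \<phi>. valuation I C \<phi> \<and>
                   locally_correct I C \<phi> \<and> interaction I C ?S \<phi> = x}"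
    unfolding J_def by (rule c_cost_C)
  have sup_eq: "\<And>x. suppl J (Coll C) (IS x) = {e. Supply \<in> x e}" unfolding J_def by (rule c_sup_C)
  have dem_eq: "\<And>x. demnd J (Coll C) (IS x) = {e. Demand \<in> x e}" unfolding J_def by (rule c_dem_C)
  have intF: "\<And>\<phi>. interaction I C ?S \<phi> \<in> ?F" by (simp add: interaction_out)
  have p1: "finite (Dm J (Coll C))" using Fb D by simp
  have p2: "\<forall>x \<in> Dm J (Coll C). suppl J (Coll C) x \<subseteq> inc J (Coll C) \<and> demnd J (Coll C) x \<subseteq> inc J (Coll C)"
    unfolding D ic using sup_eq dem_eq by auto
  have p3: "\<exists>x \<in> Dm J (Coll C). suppl J (Coll C) x = inc J (Coll C) \<and> costf J (Coll C) x < \<infinity>"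
  proof -
    obtain a where a: "valuation I C a" "locally_correct I C a" "val_cost I C a < \<infinity>"
      "\<And>u. u \<in> Vs I \<Longrightarrow> suppl I u (a u) = inc I u"
      using allsup_val[OF inst CV] allsup[OF inst] by blast
    let ?x = "interaction I C ?S a"
    have "costf J (Coll C) (IS ?x) \<le> val_cost I C a"
      unfolding cost_eq by (rule Inf_lower) (use a in blast)
    then have c: "costf J (Coll C) (IS ?x) < \<infinity>" using a(3) by (meson le_less_trans)
    have "{e. Supply \<in> ?x e} = ?E"
    proof (rule set_eqI)
      fix e
      show "e \<in> {e. Supply \<in> ?x e} \<longleftrightarrow> e \<in> ?E"
      proof
        assume "e \<in> ?E"
        moreover have "ep I C e \<in> C" using ep_in[OF \<open>e \<in> ?E\<close> disj] .
        moreover have "e \<in> Es I" using \<open>e \<in> ?E\<close> by (auto simp: Ebetween_def)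
        ultimately show "e \<in> {e. Supply \<in> ?x e}"
          using a(4)[of "ep I C e"] CV by (auto simp: interaction_S inc_def ep_def)
      qed (auto simp: interaction_S)
    qed
    then show ?thesis using c intF unfolding D ic by (intro bexI[of _ "IS ?x"]) (auto simp: sup_eq)
  qed
  have "card (IS ` ?F) \<le> card ?F" using Fb card_image_le by blast
  also have "\<dots> \<le> 4 ^ card ?E" using Fb by blast
  also have "(4::nat) ^ card ?E \<le> 4 ^ (s * t)" using Eb by (intro power_increasing) auto
  also have "(4::nat) ^ (s * t) \<le> d + 4 ^ (s * t)" by simp
  finally have "card (IS ` ?F) \<le> d + 4 ^ (s * t)" .
  then have p4: "meager (s * t) (d + 4 ^ (s * t)) J (Coll C)"
    unfolding meager_def D ic using Eb by blast
  have p5: "state_monotonous J (Coll C)"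
    unfolding state_monotonous_def D
  proof (intro ballI)
    fix a b :: "('s, 'e) cstate" assume "a \<in> IS ` ?F" "b \<in> IS ` ?F"
    then obtain x1 x2 where ab: "a = IS x1" "b = IS x2" "x1 \<in> ?F" "x2 \<in> ?F" by auto
    show "\<exists>x\<in>IS ` ?F. costf J (Coll C) x \<le> costf J (Coll C) a + costf J (Coll C) b \<and>
          suppl J (Coll C) x = suppl J (Coll C) a \<union> suppl J (Coll C) b \<and>
          demnd J (Coll C) x \<subseteq> demnd J (Coll C) a"
    proof (cases "costf J (Coll C) a < \<infinity> \<and> costf J (Coll C) b < \<infinity>")
      case True
      have c1: "Inf {val_cost I C \<phi> | \<phi>. valuation I C \<phi> \<and> locally_correct I C \<phi> \<and> interaction I C ?S \<phi> = x1} < \<infinity>"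
        using True unfolding ab cost_eq by blast
      obtain \<phi>1 where f1': "valuation I C \<phi>1" "locally_correct I C \<phi>1" "interaction I C ?S \<phi>1 = x1"
        "val_cost I C \<phi>1 = Inf {val_cost I C \<phi> | \<phi>. valuation I C \<phi> \<and> locally_correct I C \<phi> \<and> interaction I C ?S \<phi> = x1}"
        using cost_attained[OF inst CV c1] by blast
      have f1: "valuation I C \<phi>1" "locally_correct I C \<phi>1" "interaction I C ?S \<phi>1 = x1"
        "val_cost I C \<phi>1 = costf J (Coll C) a"
        using f1' unfolding ab cost_eq by blast+
      have c2: "Inf {val_cost I C \<phi> | \<phi>. valuation I C \<phi> \<and> locally_correct I C \<phi> \<and> interaction I C ?S \<phi> = x2} < \<infinity>"
        using True unfolding ab cost_eq by blast
      obtain \<phi>2 where f2': "valuation I C \<phi>2" "locally_correct I C \<phi>2" "interaction I C ?S \<phi>2 = x2"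
        "val_cost I C \<phi>2 = Inf {val_cost I C \<phi> | \<phi>. valuation I C \<phi> \<and> locally_correct I C \<phi> \<and> interaction I C ?S \<phi> = x2}"
        using cost_attained[OF inst CV c2] by blast
      have f2: "valuation I C \<phi>2" "locally_correct I C \<phi>2" "interaction I C ?S \<phi>2 = x2"
        "val_cost I C \<phi>2 = costf J (Coll C) b"
        using f2' unfolding ab cost_eq by blast+
      obtain \<phi> where f: "valuation I C \<phi>" "locally_correct I C \<phi>"
        "val_cost I C \<phi> \<le> val_cost I C \<phi>1 + val_cost I C \<phi>2"
        "\<forall>u\<in>C. suppl I u (\<phi> u) = suppl I u (\<phi>1 u) \<union> suppl I u (\<phi>2 u) \<and>
             demnd I u (\<phi> u) \<subseteq> demnd I u (\<phi>1 u)"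
        using combine[OF assms(1) CV f1(1,2) f2(1,2)] by blast
      let ?x = "interaction I C ?S \<phi>"
      have "costf J (Coll C) (IS ?x) \<le> val_cost I C \<phi>"
        unfolding cost_eq by (rule Inf_lower) (use f in blast)
      also have "val_cost I C \<phi> \<le> val_cost I C \<phi>1 + val_cost I C \<phi>2" by (rule f(3))
      also have "\<dots> = costf J (Coll C) a + costf J (Coll C) b" by (simp only: f1(4) f2(4))
      finally have c: "costf J (Coll C) (IS ?x) \<le> costf J (Coll C) a + costf J (Coll C) b" .
      have epC: "\<And>e. e \<in> ?E \<Longrightarrow> ep I C e \<in> C" by (rule ep_in[OF _ disj])
      have su: "{e. Supply \<in> ?x e} = {e. Supply \<in> x1 e} \<union> {e. Supply \<in> x2 e}"
      proof (rule set_eqI)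
        fix e
        show "e \<in> {e. Supply \<in> ?x e} \<longleftrightarrow> e \<in> {e. Supply \<in> x1 e} \<union> {e. Supply \<in> x2 e}"
        proof (cases "e \<in> ?E")
          case True
          then have "suppl I (ep I C e) (\<phi> (ep I C e)) = suppl I (ep I C e) (\<phi>1 (ep I C e)) \<union> suppl I (ep I C e) (\<phi>2 (ep I C e))"
            using f(4) epC by blast
          then show ?thesis unfolding f1(3)[symmetric] f2(3)[symmetric] mem_Collect_eq Un_iff interaction_S
            by blast
        next
          case False
          then show ?thesis unfolding f1(3)[symmetric] f2(3)[symmetric] mem_Collect_eq Un_iff interaction_S
            by simp
        qed
      qed
      have de: "{e. Demand \<in> ?x e} \<subseteq> {e. Demand \<in> x1 e}"
      proof
        fix e assume "e \<in> {e. Demand \<in> ?x e}"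
        then have e: "e \<in> ?E" "e \<in> demnd I (ep I C e) (\<phi> (ep I C e))"
          unfolding mem_Collect_eq interaction_D by auto
        then have "e \<in> demnd I (ep I C e) (\<phi>1 (ep I C e))" using f(4) epC by blast
        then show "e \<in> {e. Demand \<in> x1 e}" using e(1)
          unfolding f1(3)[symmetric] mem_Collect_eq interaction_D by simp
      qed
      have s2: "suppl J (Coll C) (IS ?x) = suppl J (Coll C) a \<union> suppl J (Coll C) b"
        unfolding ab sup_eq by (rule su)
      have d2: "demnd J (Coll C) (IS ?x) \<subseteq> demnd J (Coll C) a"
        unfolding ab dem_eq by (rule de)
      have m2: "IS ?x \<in> IS ` ?F" by (rule imageI[OF intF])
      show ?thesis
      proof (rule bexI[where x="IS ?x"])
        show "costf J (Coll C) (IS ?x) \<le> costf J (Coll C) a + costf J (Coll C) b \<and>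
          suppl J (Coll C) (IS ?x) = suppl J (Coll C) a \<union> suppl J (Coll C) b \<and>
          demnd J (Coll C) (IS ?x) \<subseteq> demnd J (Coll C) a" using c s2 d2 by (intro conjI)
      qed (rule m2)
    next
      case False
      then have "costf J (Coll C) a = top \<or> costf J (Coll C) b = top"
        unfolding infinity_ennreal_def less_top[symmetric] by blast
      then have topsum: "costf J (Coll C) a + costf J (Coll C) b = \<infinity>" by auto
      let ?x = "\<lambda>e. (if Supply \<in> x1 e \<or> Supply \<in> x2 e then {Supply} else {}) \<union> (x1 e \<inter> {Demand})"
      have xF: "?x \<in> ?F" using ab(3,4) by simp
      have su: "{e. Supply \<in> ?x e} = {e. Supply \<in> x1 e} \<union> {e. Supply \<in> x2 e}" by auto
      have de: "{e. Demand \<in> ?x e} \<subseteq> {e. Demand \<in> x1 e}" by auto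
      have s2: "suppl J (Coll C) (IS ?x) = suppl J (Coll C) a \<union> suppl J (Coll C) b"
        unfolding ab sup_eq by (rule su)
      have d2: "demnd J (Coll C) (IS ?x) \<subseteq> demnd J (Coll C) a"
        unfolding ab dem_eq by (rule de)
      have m2: "IS ?x \<in> IS ` ?F" by (rule imageI[OF xF])
      have c: "costf J (Coll C) (IS ?x) \<le> costf J (Coll C) a + costf J (Coll C) b"
        unfolding topsum by simp
      show ?thesis
      proof (rule bexI[where x="IS ?x"])
        show "costf J (Coll C) (IS ?x) \<le> costf J (Coll C) a + costf J (Coll C) b \<and>
          suppl J (Coll C) (IS ?x) = suppl J (Coll C) a \<union> suppl J (Coll C) b \<and>
          demnd J (Coll C) (IS ?x) \<subseteq> demnd J (Coll C) a" using c s2 d2 by (intro conjI)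
      qed (rule m2)
    qed
  qed
  show ?thesis using p1 p2 p3 p4 p5 by blast
qed

lemma proj_in_coll:
  assumes "v \<in> Vs I" "v \<notin> Y" "w \<in> Y" "adj I v w" "Y \<subseteq> Vs I"
  shows "proj I Y v \<in> Vs (compress I Y)"
proof -
  let ?C = "comp_of I (Vs I - Y) v"
  have Cc: "?C \<in> components I (Vs I - Y)" using assms(1,2) by (auto simp: components_def)
  have vC: "v \<in> ?C" using comp_self[of v "Vs I - Y" I] assms(1,2) by auto
  have "w \<notin> ?C" using comp_sub[of I "Vs I - Y" v] assms(3) by auto
  then have "w \<in> nbhd I ?C" using vC assms(3,4,5) unfolding nbhd_def by auto
  then have "?C \<in> coll_comps I Y" using Cc unfolding coll_comps_def by auto
  moreover have "proj I Y v = Coll ?C" using assms(2) by (simp add: proj_def)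
  ultimately show ?thesis by (simp add: c_Vs)
qed

lemma proj_in_keep: "v \<in> Y \<Longrightarrow> proj I Y v \<in> Vs (compress I Y)"
  by (simp add: proj_def c_Vs)

lemma edge_ok:
  assumes "is_instance I" "Y \<subseteq> Vs I" "e \<in> Es (compress I Y)"
  shows "src (compress I Y) e \<in> Vs (compress I Y) \<and> tgt (compress I Y) e \<in> Vs (compress I Y) \<and>
         src (compress I Y) e \<noteq> tgt (compress I Y) e"
proof -
  have e: "e \<in> Es I" "src I e \<in> Y \<or> tgt I e \<in> Y" using assms(3) by (auto simp: c_Es)
  have ends: "src I e \<in> Vs I" "tgt I e \<in> Vs I" "src I e \<noteq> tgt I e"
    using assms(1) e(1) unfolding is_instance_def by auto
  have a1: "adj I (src I e) (tgt I e)" "adj I (tgt I e) (src I e)" using e(1) by (auto simp: adj_def)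
  have "proj I Y (src I e) \<in> Vs (compress I Y)"
    using proj_in_keep[of "src I e" Y I] proj_in_coll[OF ends(1) _ _ a1(1) assms(2)] e(2) by blast
  moreover have "proj I Y (tgt I e) \<in> Vs (compress I Y)"
    using proj_in_keep[of "tgt I e" Y I] proj_in_coll[OF ends(2) _ _ a1(2) assms(2)] e(2) by blast
  moreover have "proj I Y (src I e) \<noteq> proj I Y (tgt I e)"
    using e(2) ends(3) by (auto simp: proj_def)
  ultimately show ?thesis by (simp add: c_src c_tgt)
qed

theorem lemma4p8:
  fixes I :: "('v, 'e, 's) inst" and Y :: "'v set" and s d t :: nat
  assumes "s \<ge> 1" and "d \<ge> 1" and "t \<ge> 1"
    and "decent s d I"
    and "Y \<subseteq> Vs I"
    and "\<forall>C \<in> components I (Vs I - Y). card (nbhd I C) \<le> t"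
  shows "decent (s * t) (d + 4 ^ (s * t)) (compress I Y)"
proof -
  let ?J = "compress I Y"
  have inst: "is_instance I" using assms(4) unfolding decent_def by auto
  have fV: "finite (Vs I)" and fE: "finite (Es I)" using inst unfolding is_instance_def by auto
  have P: "finite (Dm ?J u) \<and>
    (\<forall>x \<in> Dm ?J u. suppl ?J u x \<subseteq> inc ?J u \<and> demnd ?J u x \<subseteq> inc ?J u) \<and>
    (\<exists>x \<in> Dm ?J u. suppl ?J u x = inc ?J u \<and> costf ?J u x < \<infinity>) \<and>
    meager (s * t) (d + 4 ^ (s * t)) ?J u \<and> state_monotonous ?J u" if u: "u \<in> Vs ?J" for u
  proof -
    consider (K) y where "u = Keep y" "y \<in> Y" | (C) C where "u = Coll C" "C \<in> coll_comps I Y"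
      | (O) "u = Ominus"
      using u by (auto simp: c_Vs split: if_splits)
    then show ?thesis
    proof cases
      case K
      then show ?thesis using keep_ok[OF assms(4) K(2) assms(5) assms(3)] by simp
    next
      case C
      have "C \<in> components I (Vs I - Y)" using C(2) unfolding coll_comps_def by auto
      then have "card (nbhd I C) \<le> t" using assms(6) by blast
      then show ?thesis using coll_ok[OF assms(4) C(2)] C(1) by simp
    next
      case O
      then show ?thesis using om_ok[OF assms(4) assms(2)] by simp
    qed
  qed
  have fVJ: "finite (Vs ?J)"
  proof -
    have "finite Y" using assms(5) fV finite_subset by blast
    moreover have "finite (coll_comps I Y)"
    proof -
      have "coll_comps I Y \<subseteq> comp_of I (Vs I - Y) ` (Vs I - Y)"
        unfolding coll_comps_def components_def by auto
      then show ?thesis using fV finite_subset by blast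
    qed
    ultimately show ?thesis by (simp add: c_Vs)
  qed
  have fEJ: "finite (Es ?J)" using fE by (simp add: c_Es)
  have "is_instance ?J"
    unfolding is_instance_def using fVJ fEJ edge_ok[OF inst assms(5)] P by blast
  moreover have "\<forall>u \<in> Vs ?J. meager (s * t) (d + 4 ^ (s * t)) ?J u \<and> state_monotonous ?J u"
    using P by blast
  ultimately show ?thesis unfolding decent_def by blast
qed

end
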